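(* Let $b_n=\min(\sqrt{n},\sqrt{n/\lambda^*})$ (with $n/0:=\infty$). Then for every $\delta>0$ there exists a real number $M$ such that $$\sup_{n\in\mathbb{N}}\ \sup_{\beta\in\mathbb{R}^p}P_\beta\big(b_n\|\hat\beta_{AL}-\beta\|>M\big)\le\delta.$$
   Context: For each $n\ge p$: linear regression model $y=X\beta+\varepsilon$ with $y\in\mathbb{R}^n$, non-stochastic $X\in\mathbb{R}^{n\times p}$ ($p$ fixed) of full column rank, unknown $\beta\in\mathbb{R}^p$, and $\varepsilon$ with i.i.d. components of mean zero and finite variance $\sigma^2>0$; $P_\beta$ is the probability when the true parameter is $\beta$. $X'X/n\to C$ positive definite as $n\to\infty$. $\hat\beta_{LS}=(X'X)^{-1}X'y$; the events $\{\hat\beta_{LS,j}=0\}$ have probability zero and are excluded. Non-negative tuning parameters $\lambda_j=\lambda_{n,j}$, $\lambda^*=\max_j\lambda_j$. Adaptive Lasso: $\hat\beta_{AL}=\arg\min_{b\in\mathbb{R}^p}\big(\|y-Xb\|^2+2\sum_{j=1}^p\lambda_j|b_j|/|\hat\beta_{LS,j}|\big)$. *)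

theory Defs
  imports "HOL-Analysis.Analysis" "HOL-Probability.Probability"
begin

text \<open>Regression data for sample size n: design rows \<open>X n i :: real^'p\<close> for \<open>i < n\<close>,
  responses \<open>y :: nat \<Rightarrow> real\<close> (only entries \<open>i < n\<close> matter).\<close>

definition XtX :: "(nat \<Rightarrow> nat \<Rightarrow> real^'p) \<Rightarrow> nat \<Rightarrow> real^'p^'p" where
  "XtX X n = (\<chi> j k. \<Sum>i<n. X n i $ j * X n i $ k)"

definition Xty :: "(nat \<Rightarrow> nat \<Rightarrow> real^'p) \<Rightarrow> nat \<Rightarrow> (nat \<Rightarrow> real) \<Rightarrow> real^'p" where
  "Xty X n y = (\<chi> j. \<Sum>i<n. X n i $ j * y i)"

definition betaLS :: "(nat \<Rightarrow> nat \<Rightarrow> real^'p) \<Rightarrow> nat \<Rightarrow> (nat \<Rightarrow> real) \<Rightarrow> real^'p" where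
  "betaLS X n y = matrix_inv (XtX X n) *v Xty X n y"

definition AL_obj :: "(nat \<Rightarrow> nat \<Rightarrow> real^'p) \<Rightarrow> (nat \<Rightarrow> 'p \<Rightarrow> real) \<Rightarrow> nat
    \<Rightarrow> (nat \<Rightarrow> real) \<Rightarrow> real^'p \<Rightarrow> real" where
  "AL_obj X lam n y b =
     (\<Sum>i<n. (y i - X n i \<bullet> b)\<^sup>2)
     + 2 * (\<Sum>j\<in>UNIV. lam n j * \<bar>b $ j\<bar> / \<bar>betaLS X n y $ j\<bar>)"

definition betaAL :: "(nat \<Rightarrow> nat \<Rightarrow> real^'p) \<Rightarrow> (nat \<Rightarrow> 'p \<Rightarrow> real) \<Rightarrow> nat
    \<Rightarrow> (nat \<Rightarrow> real) \<Rightarrow> real^'p" where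
  "betaAL X lam n y = arg_min (AL_obj X lam n y) (\<lambda>_. True)"

definition lamstar :: "(nat \<Rightarrow> 'p::finite \<Rightarrow> real) \<Rightarrow> nat \<Rightarrow> real" where
  "lamstar lam n = Max (range (lam n))"

definition rate_b :: "(nat \<Rightarrow> 'p::finite \<Rightarrow> real) \<Rightarrow> nat \<Rightarrow> real" where
  "rate_b lam n = (if lamstar lam n = 0 then sqrt (real n)
                   else min (sqrt (real n)) (sqrt (real n / lamstar lam n)))"

abbreviation err_space :: "real measure \<Rightarrow> nat \<Rightarrow> (nat \<Rightarrow> real) measure" where
  "err_space D n \<equiv> PiM {..<n} (\<lambda>_. D)"

definition resp :: "(nat \<Rightarrow> nat \<Rightarrow> real^'p) \<Rightarrow> nat \<Rightarrow> real^'p \<Rightarrow> (nat \<Rightarrow> real) \<Rightarrow> (nat \<Rightarrow> real)" where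
  "resp X n \<beta> \<epsilon> = (\<lambda>i. X n i \<bullet> \<beta> + \<epsilon> i)"

end

theory Submission
  imports Defs
begin

lemma pair_moments:
  fixes D :: "real measure" and n :: nat
  assumes D_prob: "prob_space D" and D_var: "integrable D (\<lambda>x. x\<^sup>2)"
    and D_mean: "(\<integral>x. x \<partial>D) = 0"
    and D_borel: "sets D = sets borel"
    and ik: "i < n" "k < n"
  shows "integrable (PiM {..<n} (\<lambda>_. D)) (\<lambda>e. e i * e k)"
    "(\<integral>e. e i * e k \<partial>PiM {..<n} (\<lambda>_. D)) = (if i = k then (\<integral>x. x\<^sup>2 \<partial>D) else 0)"
proof -
  interpret P: product_prob_space "\<lambda>_::nat. D"
    by (rule product_prob_spaceI) (rule D_prob)
  interpret D: prob_space D by (rule D_prob)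
  have mD: "(\<lambda>x. x) \<in> borel_measurable D" using D_borel
    by (metis measurable_cong_sets measurable_ident_sets)
  have iD: "integrable D (\<lambda>x. x)"
    using finite_measure.square_integrable_imp_integrable[OF prob_space.finite_measure[OF D_prob] mD D_var] by simp
  define g where "g l x = (if i = k then (if l = i then x\<^sup>2 else 1) else (if l = i \<or> l = k then x else 1))" for l and x :: real
  have iC: "integrable D (\<lambda>x. 1::real)"
    by (rule finite_measure.integrable_const[OF prob_space.finite_measure[OF D_prob]])
  have gi: "integrable D (g l)" for l
  proof -
    have "g l = (\<lambda>x. x\<^sup>2) \<or> g l = (\<lambda>x. x) \<or> g l = (\<lambda>x. 1)"
      unfolding g_def by (cases "i = k"; cases "l = i"; cases "l = k") (simp_all add: fun_eq_iff)
    then show ?thesis using iD D_var iC by (elim disjE) simp_all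
  qed
  have prodg: "(\<Prod>l\<in>{..<n}. g l (e l)) = e i * e k" for e
  proof (cases "i = k")
    case True
    then show ?thesis unfolding g_def using ik
      by (simp add: prod.delta power2_eq_square)
  next
    case False
    have "{..<n} \<inter> {l. l = i \<or> l = k} = {i, k}" using ik by auto
    with False show ?thesis unfolding g_def by (simp add: prod.If_cases)
  qed
  have "integrable (PiM {..<n} (\<lambda>_. D)) (\<lambda>e. \<Prod>l\<in>{..<n}. g l (e l))"
    by (rule P.product_integrable_prod) (auto intro: gi)
  then show "integrable (PiM {..<n} (\<lambda>_. D)) (\<lambda>e. e i * e k)"
    by (simp add: prodg)
  have "(\<integral>e. (\<Prod>l\<in>{..<n}. g l (e l)) \<partial>PiM {..<n} (\<lambda>_. D)) = (\<Prod>l\<in>{..<n}. integral\<^sup>L D (g l))"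
    by (rule P.product_integral_prod) (auto intro: gi)
  also have "\<dots> = (if i = k then (\<integral>x. x\<^sup>2 \<partial>D) else 0)"
  proof (cases "i = k")
    case True
    have one: "(\<integral>x. (1::real) \<partial>D) = 1"
      using prob_space.prob_space[OF D_prob] by simp
    have "integral\<^sup>L D (g l) = (if l = i then (\<integral>x. x\<^sup>2 \<partial>D) else 1)" for l
    proof (cases "l = i")
      case True
      then have "g l = (\<lambda>x. x\<^sup>2)" using \<open>i = k\<close> by (simp add: g_def fun_eq_iff)
      then show ?thesis using True by simp
    next
      case False
      then have "g l = (\<lambda>x. 1)" using \<open>i = k\<close> by (simp add: g_def fun_eq_iff)
      then show ?thesis using False one by simp
    qed
    then have "(\<Prod>l\<in>{..<n}. integral\<^sup>L D (g l)) = (\<Prod>l\<in>{..<n}. if l = i then (\<integral>x. x\<^sup>2 \<partial>D) else 1)"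
      by simp
    also have "\<dots> = (\<integral>x. x\<^sup>2 \<partial>D)" using ik by (simp add: prod.delta)
    finally show ?thesis using True by simp
  next
    case False
    have "g i = (\<lambda>x. x)" using False by (simp add: g_def fun_eq_iff)
    then have "integral\<^sup>L D (g i) = 0" using D_mean by simp
    then show ?thesis using False ik by (auto intro!: prod_zero)
  qed
  finally show "(\<integral>e. e i * e k \<partial>PiM {..<n} (\<lambda>_. D)) = (if i = k then (\<integral>x. x\<^sup>2 \<partial>D) else 0)"
    by (simp add: prodg)
qed

lemma quad_moment:
  fixes D :: "real measure" and w :: "nat \<Rightarrow> 'q::finite \<Rightarrow> real"
  assumes D_prob: "prob_space D" and D_var: "integrable D (\<lambda>x. x\<^sup>2)"
    and D_mean: "(\<integral>x. x \<partial>D) = 0"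
    and D_borel: "sets D = sets borel"
  shows "integrable (PiM {..<n} (\<lambda>_. D)) (\<lambda>e. \<Sum>j\<in>UNIV. (\<Sum>i<n. w i j * e i)\<^sup>2)"
    "(\<integral>e. (\<Sum>j\<in>UNIV. (\<Sum>i<n. w i j * e i)\<^sup>2) \<partial>PiM {..<n} (\<lambda>_. D))
       = (\<integral>x. x\<^sup>2 \<partial>D) * (\<Sum>j\<in>UNIV. \<Sum>i<n. (w i j)\<^sup>2)"
proof -
  have eq: "(\<Sum>j\<in>UNIV. (\<Sum>i<n. w i j * e i)\<^sup>2) = (\<Sum>j\<in>UNIV. \<Sum>i<n. \<Sum>k<n. (w i j * w k j) * (e i * e k))" for e :: "nat \<Rightarrow> real"
    by (simp add: power2_eq_square sum_product algebra_simps)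
  have ii: "integrable (PiM {..<n} (\<lambda>_. D)) (\<lambda>e. e i * e k)" if "i < n" "k < n" for i k
    using pair_moments(1)[OF assms that] .
  have int: "integrable (PiM {..<n} (\<lambda>_. D)) (\<lambda>e. \<Sum>j\<in>UNIV. \<Sum>i<n. \<Sum>k<n. (w i j * w k j) * (e i * e k))"
    by (intro Bochner_Integration.integrable_sum integrable_mult_right ii) auto
  then show "integrable (PiM {..<n} (\<lambda>_. D)) (\<lambda>e. \<Sum>j\<in>UNIV. (\<Sum>i<n. w i j * e i)\<^sup>2)"
    by (simp only: eq)
  have "(\<integral>e. (\<Sum>j\<in>UNIV. (\<Sum>i<n. w i j * e i)\<^sup>2) \<partial>PiM {..<n} (\<lambda>_. D))
      = (\<integral>e. (\<Sum>j\<in>UNIV. \<Sum>i<n. \<Sum>k<n. (w i j * w k j) * (e i * e k)) \<partial>PiM {..<n} (\<lambda>_. D))"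
    by (simp only: eq)
  also have "\<dots> = (\<Sum>j\<in>UNIV. \<Sum>i<n. \<Sum>k<n. (w i j * w k j) * (\<integral>e. e i * e k \<partial>PiM {..<n} (\<lambda>_. D)))"
    apply (subst Bochner_Integration.integral_sum)
     apply (intro Bochner_Integration.integrable_sum integrable_mult_right ii; simp)
    apply (intro sum.cong refl)
    apply (subst Bochner_Integration.integral_sum)
     apply (intro Bochner_Integration.integrable_sum integrable_mult_right ii; simp)
    apply (intro sum.cong refl)
    apply (subst Bochner_Integration.integral_sum)
     apply (intro Bochner_Integration.integrable_sum integrable_mult_right ii; simp)
    apply (intro sum.cong refl)
    apply simp
    done
  also have "\<dots> = (\<Sum>j\<in>UNIV. \<Sum>i<n. \<Sum>k<n. (w i j * w k j) * (if i = k then (\<integral>x. x\<^sup>2 \<partial>D) else 0))"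
    by (intro sum.cong refl) (simp add: pair_moments(2)[OF assms])
  also have "\<dots> = (\<integral>x. x\<^sup>2 \<partial>D) * (\<Sum>j\<in>UNIV. \<Sum>i<n. (w i j)\<^sup>2)"
    by (simp add: sum_distrib_left power2_eq_square if_distrib sum.delta mult.commute cong: if_cong)
  finally show "(\<integral>e. (\<Sum>j\<in>UNIV. (\<Sum>i<n. w i j * e i)\<^sup>2) \<partial>PiM {..<n} (\<lambda>_. D))
       = (\<integral>x. x\<^sup>2 \<partial>D) * (\<Sum>j\<in>UNIV. \<Sum>i<n. (w i j)\<^sup>2)" .
qed

definition qf :: "real^'n^'n \<Rightarrow> real^'n \<Rightarrow> real" where
  "qf A u = u \<bullet> (A *v u)"

lemma qf_expand: "qf A u = (\<Sum>j\<in>UNIV. \<Sum>k\<in>UNIV. u$j * A$j$k * u$k)"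
  unfolding qf_def inner_vec_def matrix_vector_mult_def
  by (simp add: sum_distrib_left mult.assoc)

lemma qf_XtX: "qf (XtX X n) u = (\<Sum>i<n. (X n i \<bullet> u)\<^sup>2)"
proof -
  have "qf (XtX X n) u = (\<Sum>j\<in>UNIV. \<Sum>k\<in>UNIV. \<Sum>i<n. (X n i $ j * u $ j) * (X n i $ k * u $ k))"
    unfolding qf_expand XtX_def by (simp add: sum_distrib_left sum_distrib_right mult_ac)
  also have "\<dots> = (\<Sum>i<n. \<Sum>j\<in>UNIV. \<Sum>k\<in>UNIV. (X n i $ j * u $ j) * (X n i $ k * u $ k))"
    by (simp add: sum.swap[of _ "{..<n}"])
  also have "\<dots> = (\<Sum>i<n. (X n i \<bullet> u)\<^sup>2)"
    unfolding inner_vec_def power2_eq_square by (simp add: sum_product)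
  finally show ?thesis .
qed

lemma qf_scale: "qf (c *\<^sub>R A) u = c * qf A u"
  unfolding qf_expand by (simp add: sum_distrib_left mult_ac)

lemma qf_diff: "qf A u - qf B u = qf (A - B) u"
  unfolding qf_expand by (simp add: sum_subtractf algebra_simps)

lemma qf_homog: "qf A (t *\<^sub>R u) = t\<^sup>2 * qf A u"
  unfolding qf_expand by (simp add: sum_distrib_left mult_ac power2_eq_square)

lemma qf_bound: "\<bar>qf A u\<bar> \<le> (\<Sum>j\<in>UNIV. \<Sum>k\<in>UNIV. \<bar>A$j$k\<bar>) * (norm u)\<^sup>2"
proof -
  have "\<bar>qf A u\<bar> \<le> (\<Sum>j\<in>UNIV. \<Sum>k\<in>UNIV. \<bar>u$j * A$j$k * u$k\<bar>)"
    unfolding qf_expand by (rule order.trans[OF sum_abs]) (intro sum_mono sum_abs)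
  also have "\<dots> \<le> (\<Sum>j\<in>UNIV. \<Sum>k\<in>UNIV. \<bar>A$j$k\<bar> * (norm u)\<^sup>2)"
  proof (intro sum_mono)
    fix j k
    have uu: "\<bar>u$j\<bar> * \<bar>u$k\<bar> \<le> norm u * norm u"
      by (intro mult_mono component_le_norm_cart) auto
    then show "\<bar>u$j * A$j$k * u$k\<bar> \<le> \<bar>A$j$k\<bar> * (norm u)\<^sup>2"
      using mult_right_mono[OF uu abs_ge_zero[of "A$j$k"]]
      by (simp add: abs_mult power2_eq_square mult_ac)
  qed
  finally show ?thesis by (simp add: sum_distrib_right)
qed

lemma qf_cont: "continuous_on S (qf A)"
  unfolding qf_def[abs_def] by (intro continuous_intros)

lemma qf_pos_uniform:
  fixes A :: "real^'n^'n"
  assumes "\<And>u. u \<noteq> 0 \<Longrightarrow> qf A u > 0"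
  shows "\<exists>m>0. \<forall>u. qf A u \<ge> m * (norm u)\<^sup>2"
proof -
  obtain i :: 'n where True by auto
  have ne: "sphere (0::real^'n) 1 \<noteq> {}"
    by (metis empty_iff mem_sphere_0 norm_axis_1)
  obtain x where x: "x \<in> sphere 0 1" and xmin: "\<And>y. y \<in> sphere 0 1 \<Longrightarrow> qf A x \<le> qf A y"
    using continuous_attains_inf[OF compact_sphere ne qf_cont] by blast
  have x0: "x \<noteq> 0" using x by auto
  have mpos: "qf A x > 0" using assms x0 by auto
  show ?thesis
  proof (intro exI[of _ "qf A x"] conjI allI mpos)
    fix u :: "real^'n"
    show "qf A x * (norm u)\<^sup>2 \<le> qf A u"
    proof (cases "u = 0")
      case True then show ?thesis by (simp add: qf_def)
    next
      case False
      have "(inverse (norm u)) *\<^sub>R u \<in> sphere 0 1" using False by (simp add: norm_scaleR)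
      then have "qf A x \<le> qf A ((inverse (norm u)) *\<^sub>R u)" by (rule xmin)
      also have "\<dots> = (inverse (norm u))\<^sup>2 * qf A u" by (rule qf_homog)
      finally have "qf A x * (norm u)\<^sup>2 \<le> (inverse (norm u))\<^sup>2 * qf A u * (norm u)\<^sup>2"
        by (simp add: mult_right_mono)
      also have "\<dots> = qf A u" using False by (simp add: field_simps power2_eq_square)
      finally show ?thesis .
    qed
  qed
qed

lemma XtX_pos:
  fixes X :: "nat \<Rightarrow> nat \<Rightarrow> real^'p::finite"
  assumes full_rank: "\<And>n b. n \<ge> CARD('p) \<Longrightarrow> (\<forall>i<n. X n i \<bullet> b = 0) \<Longrightarrow> b = 0"
    and n: "n \<ge> CARD('p)" and u: "u \<noteq> 0"
  shows "qf (XtX X n) u > 0"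
proof -
  obtain i where i: "i < n" "X n i \<bullet> u \<noteq> 0" using full_rank[OF n] u by blast
  have "0 < (X n i \<bullet> u)\<^sup>2" using i by simp
  also have "\<dots> \<le> (\<Sum>i<n. (X n i \<bullet> u)\<^sup>2)"
    by (rule member_le_sum) (use i in auto)
  finally show ?thesis by (simp add: qf_XtX)
qed

lemma uniform_lower:
  fixes X :: "nat \<Rightarrow> nat \<Rightarrow> real^'p::finite" and C :: "real^'p^'p"
  assumes full_rank: "\<And>n b. n \<ge> CARD('p) \<Longrightarrow> (\<forall>i<n. X n i \<bullet> b = 0) \<Longrightarrow> b = 0"
    and lim_C: "(\<lambda>n. (1 / real n) *\<^sub>R XtX X n) \<longlonglongrightarrow> C"
    and C_pd: "\<And>x. x \<noteq> 0 \<Longrightarrow> x \<bullet> (C *v x) > 0"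
  shows "\<exists>c>0. \<forall>n\<ge>CARD('p). \<forall>u. qf (XtX X n) u \<ge> c * real n * (norm u)\<^sup>2"
proof -
  obtain mC where mC: "mC > 0" "\<And>u. qf C u \<ge> mC * (norm u)\<^sup>2"
    using qf_pos_uniform[of C] C_pd unfolding qf_def by blast
  define e where "e n = (\<Sum>j\<in>UNIV. \<Sum>k\<in>UNIV. \<bar>((1 / real n) *\<^sub>R XtX X n - C)$j$k\<bar>)" for n
  have "(\<lambda>n. (1 / real n) *\<^sub>R XtX X n - C) \<longlonglongrightarrow> C - C"
    by (intro tendsto_intros lim_C)
  then have "(\<lambda>n. (1 / real n) *\<^sub>R XtX X n - C) \<longlonglongrightarrow> 0" by simp
  then have "e \<longlonglongrightarrow> (\<Sum>j\<in>(UNIV::'p set). \<Sum>k\<in>(UNIV::'p set). \<bar>(0::real^'p^'p)$j$k\<bar>)"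
    unfolding e_def by (intro tendsto_intros)
  then have "e \<longlonglongrightarrow> 0" by simp
  then have "eventually (\<lambda>n. e n < mC / 2) sequentially"
    using mC(1) by (intro order_tendstoD(2)) auto
  then obtain N where N: "\<And>n. n \<ge> N \<Longrightarrow> e n < mC / 2"
    by (auto simp: eventually_sequentially)
  have big: "qf (XtX X n) u \<ge> mC / 2 * real n * (norm u)\<^sup>2" if "n \<ge> N" "n \<ge> 1" for n u
  proof -
    have n0: "real n > 0" using that by simp
    have "qf C u - qf ((1 / real n) *\<^sub>R XtX X n) u = qf (C - (1 / real n) *\<^sub>R XtX X n) u"
      by (rule qf_diff)
    also have "\<dots> \<le> \<bar>qf (C - (1 / real n) *\<^sub>R XtX X n) u\<bar>" by simp
    also have "\<dots> \<le> (\<Sum>j\<in>UNIV. \<Sum>k\<in>UNIV. \<bar>(C - (1 / real n) *\<^sub>R XtX X n)$j$k\<bar>) * (norm u)\<^sup>2"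
      by (rule qf_bound)
    also have "(\<Sum>j\<in>UNIV. \<Sum>k\<in>UNIV. \<bar>(C - (1 / real n) *\<^sub>R XtX X n)$j$k\<bar>) = e n"
      unfolding e_def by (intro sum.cong refl) (simp add: abs_minus_commute)
    finally have "qf C u - qf ((1 / real n) *\<^sub>R XtX X n) u \<le> e n * (norm u)\<^sup>2" .
    moreover have "e n * (norm u)\<^sup>2 \<le> mC / 2 * (norm u)\<^sup>2"
      using N[OF that(1)] by (intro mult_right_mono) auto
    ultimately have "qf ((1 / real n) *\<^sub>R XtX X n) u \<ge> mC / 2 * (norm u)\<^sup>2"
      using mC(2)[of u] by linarith
    then have "(1 / real n) * qf (XtX X n) u \<ge> mC / 2 * (norm u)\<^sup>2" by (simp add: qf_scale)
    then have "real n * ((1 / real n) * qf (XtX X n) u) \<ge> real n * (mC / 2 * (norm u)\<^sup>2)"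
      using n0 by (intro mult_left_mono) auto
    then show ?thesis using n0 by (simp add: field_simps)
  qed
  have "\<forall>n\<in>{CARD('p)..<N}. \<exists>m>0. \<forall>u. qf (XtX X n) u \<ge> m * (norm u)\<^sup>2"
  proof
    fix n assume "n \<in> {CARD('p)..<N}"
    then have "n \<ge> CARD('p)" by auto
    show "\<exists>m>0. \<forall>u. qf (XtX X n) u \<ge> m * (norm u)\<^sup>2"
    proof (rule qf_pos_uniform)
      fix u :: "real^'p" assume "u \<noteq> 0"
      then show "qf (XtX X n) u > 0" using XtX_pos[of X n u] full_rank \<open>n \<ge> CARD('p)\<close> by blast
    qed
  qed
  then obtain m where m: "\<And>n. n \<in> {CARD('p)..<N} \<Longrightarrow> m n > 0 \<and> (\<forall>u. qf (XtX X n) u \<ge> m n * (norm u)\<^sup>2)"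
    by metis
  define c where "c = Min (insert (mC / 2) ((\<lambda>n. m n / real n) ` {CARD('p)..<N}))"
  have cp: "0 < CARD('p)" by simp
  have cp': "\<And>x. CARD('p) \<le> x \<Longrightarrow> 0 < x" using cp by linarith
  have cpos: "c > 0" unfolding c_def
    using mC(1) m cp' by (subst Min_gr_iff) (auto intro!: divide_pos_pos)
  have cle1: "c \<le> mC / 2" unfolding c_def by (intro Min_le) auto
  have cle2: "c \<le> m n / real n" if "n \<in> {CARD('p)..<N}" for n
    unfolding c_def using that by (intro Min_le) auto
  show ?thesis
  proof (intro exI[of _ c] conjI cpos allI impI)
    fix n and u :: "real^'p" assume n: "n \<ge> CARD('p)"
    have n1: "n \<ge> 1" using n cp by linarith
    have nn: "0 \<le> real n * (norm u)\<^sup>2" by simp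
    show "c * real n * (norm u)\<^sup>2 \<le> qf (XtX X n) u"
    proof (cases "n \<ge> N")
      case True
      have "c * real n * (norm u)\<^sup>2 \<le> mC / 2 * real n * (norm u)\<^sup>2"
        using mult_right_mono[OF cle1 nn] by (simp add: mult_ac)
      also have "\<dots> \<le> qf (XtX X n) u" by (rule big[OF True n1])
      finally show ?thesis .
    next
      case False
      then have nin: "n \<in> {CARD('p)..<N}" using n by auto
      have "c * real n * (norm u)\<^sup>2 \<le> (m n / real n) * real n * (norm u)\<^sup>2"
        using mult_right_mono[OF cle2[OF nin] nn] by (simp only: mult_ac)
      also have "\<dots> = m n * (norm u)\<^sup>2" using n1 by simp
      also have "\<dots> \<le> qf (XtX X n) u" using m[OF nin] by auto
      finally show ?thesis .
    qed
  qed
qed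

lemma XtX_inv:
  fixes X :: "nat \<Rightarrow> nat \<Rightarrow> real^'p::finite"
  assumes full_rank: "\<And>n b. n \<ge> CARD('p) \<Longrightarrow> (\<forall>i<n. X n i \<bullet> b = 0) \<Longrightarrow> b = 0"
    and n: "n \<ge> CARD('p)"
  shows "XtX X n *v (matrix_inv (XtX X n) *v z) = z"
proof -
  have "\<forall>x. XtX X n *v x = 0 \<longrightarrow> x = 0"
  proof (intro allI impI)
    fix x :: "real^'p" assume "XtX X n *v x = 0"
    then have "qf (XtX X n) x = 0" by (simp add: qf_def)
    then show "x = 0" using XtX_pos[of X n x] full_rank n by fastforce
  qed
  then have "invertible (XtX X n)"
    by (simp add: invertible_left_inverse matrix_left_invertible_ker)
  then have "\<exists>A'. XtX X n ** A' = mat 1 \<and> A' ** XtX X n = mat 1"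
    by (simp add: invertible_def)
  then have "XtX X n ** matrix_inv (XtX X n) = mat 1"
    unfolding matrix_inv_def by (rule someI_ex[where P = "\<lambda>A'. XtX X n ** A' = mat 1 \<and> A' ** XtX X n = mat 1", THEN conjunct1])
  then show ?thesis by (simp add: matrix_vector_mul_assoc)
qed

lemma normal_eq:
  fixes X :: "nat \<Rightarrow> nat \<Rightarrow> real^'p::finite"
  assumes full_rank: "\<And>n b. n \<ge> CARD('p) \<Longrightarrow> (\<forall>i<n. X n i \<bullet> b = 0) \<Longrightarrow> b = 0"
    and n: "n \<ge> CARD('p)"
  shows "XtX X n *v betaLS X n y = Xty X n y"
  unfolding betaLS_def by (rule XtX_inv[OF full_rank n])

lemma Xty_resp: "Xty X n (resp X n \<beta> \<epsilon>) = XtX X n *v \<beta> + Xty X n \<epsilon>"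
proof -
  have "(\<Sum>i<n. X n i $ j * (X n i \<bullet> \<beta> + \<epsilon> i)) =
        (\<Sum>k\<in>UNIV. (\<Sum>i<n. X n i $ j * X n i $ k) * \<beta> $ k) + (\<Sum>i<n. X n i $ j * \<epsilon> i)" for j
  proof -
    have "(\<Sum>i<n. X n i $ j * (X n i \<bullet> \<beta> + \<epsilon> i)) =
          (\<Sum>i<n. \<Sum>k\<in>UNIV. X n i $ j * X n i $ k * \<beta> $ k) + (\<Sum>i<n. X n i $ j * \<epsilon> i)"
      by (simp add: inner_vec_def distrib_left sum.distrib sum_distrib_left mult.assoc)
    also have "(\<Sum>i<n. \<Sum>k\<in>UNIV. X n i $ j * X n i $ k * \<beta> $ k) = (\<Sum>k\<in>UNIV. \<Sum>i<n. X n i $ j * X n i $ k * \<beta> $ k)"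
      by (rule sum.swap)
    also have "\<dots> = (\<Sum>k\<in>UNIV. (\<Sum>i<n. X n i $ j * X n i $ k) * \<beta> $ k)"
      by (simp only: sum_distrib_right)
    finally show ?thesis .
  qed
  then show ?thesis
    unfolding Xty_def XtX_def resp_def matrix_vector_mult_def by (simp add: vec_eq_iff)
qed

lemma inner_Xty: "Xty X n y \<bullet> d = (\<Sum>i<n. y i * (X n i \<bullet> d))"
proof -
  have "Xty X n y \<bullet> d = (\<Sum>j\<in>UNIV. (\<Sum>i<n. X n i $ j * y i) * d $ j)"
    unfolding Xty_def inner_vec_def by simp
  also have "\<dots> = (\<Sum>j\<in>UNIV. \<Sum>i<n. y i * (X n i $ j * d $ j))"
    unfolding sum_distrib_right by (intro sum.cong refl) (simp add: mult_ac)
  also have "\<dots> = (\<Sum>i<n. \<Sum>j\<in>UNIV. y i * (X n i $ j * d $ j))" by (rule sum.swap)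
  also have "\<dots> = (\<Sum>i<n. y i * (X n i \<bullet> d))"
    unfolding inner_vec_def inner_real_def by (simp only: sum_distrib_left)
  finally show ?thesis .
qed

lemma inner_XtX: "(XtX X n *v b) \<bullet> d = (\<Sum>i<n. (X n i \<bullet> b) * (X n i \<bullet> d))"
proof -
  have "(XtX X n *v b) \<bullet> d = (\<Sum>j\<in>UNIV. \<Sum>k\<in>UNIV. \<Sum>i<n. (X n i $ k * b $ k) * (X n i $ j * d $ j))"
    unfolding XtX_def inner_vec_def matrix_vector_mult_def
    by (simp add: sum_distrib_left sum_distrib_right mult_ac)
  also have "\<dots> = (\<Sum>k\<in>UNIV. \<Sum>j\<in>UNIV. \<Sum>i<n. (X n i $ k * b $ k) * (X n i $ j * d $ j))"
    by (rule sum.swap)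
  also have "\<dots> = (\<Sum>k\<in>UNIV. \<Sum>i<n. \<Sum>j\<in>UNIV. (X n i $ k * b $ k) * (X n i $ j * d $ j))"
    by (intro sum.cong refl) (rule sum.swap)
  also have "\<dots> = (\<Sum>i<n. \<Sum>k\<in>UNIV. \<Sum>j\<in>UNIV. (X n i $ k * b $ k) * (X n i $ j * d $ j))"
    by (rule sum.swap)
  also have "\<dots> = (\<Sum>i<n. (X n i \<bullet> b) * (X n i \<bullet> d))"
    unfolding inner_vec_def inner_real_def sum_product by (rule refl)
  finally show ?thesis .
qed

lemma LS_err:
  fixes X :: "nat \<Rightarrow> nat \<Rightarrow> real^'p::finite"
  assumes full_rank: "\<And>n b. n \<ge> CARD('p) \<Longrightarrow> (\<forall>i<n. X n i \<bullet> b = 0) \<Longrightarrow> b = 0"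
    and n: "n \<ge> CARD('p)"
  shows "XtX X n *v (betaLS X n (resp X n \<beta> \<epsilon>) - \<beta>) = Xty X n \<epsilon>"
proof -
  have "XtX X n *v betaLS X n (resp X n \<beta> \<epsilon>) = Xty X n (resp X n \<beta> \<epsilon>)"
    apply (rule normal_eq[where X=X])
     apply (rule full_rank; assumption)
    apply (rule n)
    done
  then show ?thesis by (simp add: Xty_resp matrix_vector_mult_diff_distrib)
qed

lemma rss_decomp:
  fixes X :: "nat \<Rightarrow> nat \<Rightarrow> real^'p::finite"
  assumes full_rank: "\<And>n b. n \<ge> CARD('p) \<Longrightarrow> (\<forall>i<n. X n i \<bullet> b = 0) \<Longrightarrow> b = 0"
    and n: "n \<ge> CARD('p)"
  shows "(\<Sum>i<n. (y i - X n i \<bullet> b)\<^sup>2) = (\<Sum>i<n. (y i - X n i \<bullet> betaLS X n y)\<^sup>2) + qf (XtX X n) (b - betaLS X n y)"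
proof -
  define bL where "bL = betaLS X n y"
  define d where "d = b - bL"
  have cross: "(\<Sum>i<n. (y i - X n i \<bullet> bL) * (X n i \<bullet> d)) = 0"
  proof -
    have "(\<Sum>i<n. (y i - X n i \<bullet> bL) * (X n i \<bullet> d)) = Xty X n y \<bullet> d - (XtX X n *v bL) \<bullet> d"
      by (simp add: inner_Xty inner_XtX left_diff_distrib sum_subtractf)
    also have "\<dots> = 0" using normal_eq[OF full_rank n, where y = y] by (simp add: bL_def)
    finally show ?thesis .
  qed
  have "(\<Sum>i<n. (y i - X n i \<bullet> b)\<^sup>2) = (\<Sum>i<n. (y i - X n i \<bullet> bL)\<^sup>2 - 2 * ((y i - X n i \<bullet> bL) * (X n i \<bullet> d)) + (X n i \<bullet> d)\<^sup>2)"
    by (intro sum.cong refl) (simp add: d_def inner_diff_right power2_eq_square algebra_simps)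
  also have "\<dots> = (\<Sum>i<n. (y i - X n i \<bullet> bL)\<^sup>2) - 2 * (\<Sum>i<n. (y i - X n i \<bullet> bL) * (X n i \<bullet> d)) + (\<Sum>i<n. (X n i \<bullet> d)\<^sup>2)"
    by (simp add: sum.distrib sum_subtractf sum_distrib_left)
  also have "\<dots> = (\<Sum>i<n. (y i - X n i \<bullet> bL)\<^sup>2) + qf (XtX X n) d"
    by (simp add: cross qf_XtX)
  finally show ?thesis by (simp add: bL_def d_def)
qed

lemma AL_bound:
  fixes X :: "nat \<Rightarrow> nat \<Rightarrow> real^'p::finite" and lam :: "nat \<Rightarrow> 'p \<Rightarrow> real"
  assumes full_rank: "\<And>n b. n \<ge> CARD('p) \<Longrightarrow> (\<forall>i<n. X n i \<bullet> b = 0) \<Longrightarrow> b = 0"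
    and lam_nonneg: "\<And>n j. lam n j \<ge> 0"
    and c: "c > 0" "\<And>u. qf (XtX X n) u \<ge> c * real n * (norm u)\<^sup>2"
    and n: "n \<ge> CARD('p)"
  shows "qf (XtX X n) (betaAL X lam n y - betaLS X n y) \<le> 2 * (\<Sum>j\<in>UNIV. lam n j)"
proof -
  define bL where "bL = betaLS X n y"
  define f where "f = AL_obj X lam n y"
  define RSS where "RSS = (\<Sum>i<n. (y i - X n i \<bullet> bL)\<^sup>2)"
  define S where "S = (\<Sum>j\<in>UNIV. lam n j)"
  define pen where "pen b = (\<Sum>j\<in>UNIV. lam n j * \<bar>b $ j\<bar> / \<bar>bL $ j\<bar>)" for b :: "real^'p"
  have pen_nn: "pen b \<ge> 0" for b unfolding pen_def using lam_nonneg by (intro sum_nonneg) auto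
  have f_eq: "f b = RSS + qf (XtX X n) (b - bL) + 2 * pen b" for b
    unfolding f_def AL_obj_def RSS_def pen_def bL_def using rss_decomp[OF full_rank n, where y = y and b = b] by simp
  have pen_bL: "pen bL \<le> S" unfolding pen_def S_def
    by (intro sum_mono) (use lam_nonneg in auto)
  have S_nn: "S \<ge> 0" unfolding S_def using lam_nonneg by (intro sum_nonneg) auto
  have cp: "0 < CARD('p)" by simp
  have npos: "real n > 0" using n cp by linarith
  have qf_lb: "qf (XtX X n) u \<ge> c * real n * (norm u)\<^sup>2" for u by (rule c(2))
  have f_alt: "f = (\<lambda>b. (\<Sum>i<n. (y i - X n i \<bullet> b)\<^sup>2) + 2 * (\<Sum>j\<in>UNIV. (lam n j / \<bar>bL $ j\<bar>) * \<bar>b $ j\<bar>))"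
    unfolding f_def AL_obj_def bL_def by (simp add: fun_eq_iff)
  have cont: "continuous_on A f" for A unfolding f_alt by (intro continuous_intros)
  define R where "R = sqrt (2 * S / (c * real n)) + 1"
  have sq0: "sqrt (2 * S / (c * real n)) \<ge> 0"
    using S_nn c(1) npos by simp
  have Rpos: "R > 0" unfolding R_def using sq0 by linarith
  obtain b0 where b0: "b0 \<in> cball bL R" and b0min: "\<And>b. b \<in> cball bL R \<Longrightarrow> f b0 \<le> f b"
    using continuous_attains_inf[OF compact_cball _ cont, of bL R] Rpos by fastforce
  have glob: "f b0 \<le> f b" for b
  proof (cases "b \<in> cball bL R")
    case True then show ?thesis by (rule b0min)
  next
    case False
    then have nb: "norm (b - bL) > R" by (simp add: dist_norm norm_minus_commute)
    have "sqrt (2 * S / (c * real n)) < norm (b - bL)" using nb unfolding R_def by linarith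
    then have "(sqrt (2 * S / (c * real n)))\<^sup>2 < (norm (b - bL))\<^sup>2"
      using sq0 by (intro power_strict_mono) auto
    then have "2 * S / (c * real n) < (norm (b - bL))\<^sup>2"
      using S_nn c(1) npos by simp
    then have "2 * S < c * real n * (norm (b - bL))\<^sup>2"
      using c(1) npos by (simp add: divide_less_eq mult_ac)
    also have "\<dots> \<le> qf (XtX X n) (b - bL)" by (rule qf_lb)
    finally have "f bL < f b" using f_eq[of b] f_eq[of bL] pen_bL pen_nn[of b]
      by (simp add: qf_def)
    moreover have "f b0 \<le> f bL" using b0min[of bL] Rpos by simp
    ultimately show ?thesis by simp
  qed
  have "is_arg_min f (\<lambda>_. True) b0" unfolding is_arg_min_def using glob by (simp add: not_less)
  then have "is_arg_min f (\<lambda>_. True) (arg_min f (\<lambda>_. True))"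
    unfolding arg_min_def by (rule someI)
  then have "f (betaAL X lam n y) \<le> f bL"
    unfolding betaAL_def f_def is_arg_min_def by (simp add: not_less)
  then show ?thesis
    using f_eq[of "betaAL X lam n y"] f_eq[of bL] pen_bL pen_nn[of "betaAL X lam n y"]
    by (simp add: qf_def S_def bL_def)
qed

lemma rate_nn:
  assumes "\<And>j. lam n j \<ge> 0"
  shows "rate_b lam n \<ge> 0"
proof -
  have "lam n undefined \<le> lamstar lam n" unfolding lamstar_def by (rule Max_ge) auto
  then have "lamstar lam n \<ge> 0" using assms[of undefined] by linarith
  then show ?thesis unfolding rate_b_def by auto
qed

lemma rate_le: "rate_b lam n \<le> sqrt (real n)"
  unfolding rate_b_def by auto

lemma AL_rate:
  fixes X :: "nat \<Rightarrow> nat \<Rightarrow> real^'p::finite" and lam :: "nat \<Rightarrow> 'p \<Rightarrow> real"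
  assumes full_rank: "\<And>n b. n \<ge> CARD('p) \<Longrightarrow> (\<forall>i<n. X n i \<bullet> b = 0) \<Longrightarrow> b = 0"
    and lam_nonneg: "\<And>n j. lam n j \<ge> 0"
    and c: "c > 0" "\<And>u. qf (XtX X n) u \<ge> c * real n * (norm u)\<^sup>2"
    and n: "n \<ge> CARD('p)"
  shows "rate_b lam n * norm (betaAL X lam n y - betaLS X n y) \<le> sqrt (2 * real CARD('p) / c)"
proof -
  define d where "d = betaAL X lam n y - betaLS X n y"
  define ls where "ls = lamstar lam n"
  have cp: "0 < CARD('p)" by simp
  have npos: "real n > 0" using n cp by linarith
  have lam_le: "lam n j \<le> ls" for j
    unfolding ls_def lamstar_def by (rule Max_ge) auto
  have ls_nn: "ls \<ge> 0" using lam_le[of undefined] lam_nonneg[of n undefined] by linarith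
  have S: "(\<Sum>j\<in>UNIV. lam n j) \<le> real CARD('p) * ls"
    using sum_bounded_above[of UNIV "lam n" ls] lam_le by auto
  have qfb: "qf (XtX X n) d \<le> 2 * (\<Sum>j\<in>UNIV. lam n j)"
    unfolding d_def
    apply (rule AL_bound[where X=X and lam=lam and c=c])
        apply (rule full_rank; assumption)
       apply (rule lam_nonneg)
      apply (rule c(1))
     apply (rule c(2))
    apply (rule n)
    done
  have key: "c * real n * (norm d)\<^sup>2 \<le> 2 * real CARD('p) * ls"
    using c(2)[of d] qfb S by linarith
  have nd: "0 \<le> norm d" by simp
  show ?thesis
  proof (cases "ls = 0")
    case True
    then have "c * real n * (norm d)\<^sup>2 \<le> 0" using key by simp
    moreover have "c * real n > 0" using c(1) npos by simp
    ultimately have "(norm d)\<^sup>2 \<le> 0"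
      using mult_le_cancel_left_pos[of "c * real n" "(norm d)\<^sup>2" 0] by simp
    then have "d = 0" by simp
    then show ?thesis using c(1) by (simp add: d_def[symmetric])
  next
    case False
    then have lspos: "ls > 0" using ls_nn by simp
    have r: "rate_b lam n \<le> sqrt (real n / ls)"
      unfolding rate_b_def using False by (simp add: ls_def)
    have r0: "rate_b lam n \<ge> 0" by (rule rate_nn) (rule lam_nonneg)
    have "(rate_b lam n * norm d)\<^sup>2 = (rate_b lam n)\<^sup>2 * (norm d)\<^sup>2" by (simp add: power_mult_distrib)
    also have "\<dots> \<le> (real n / ls) * (norm d)\<^sup>2"
    proof (rule mult_right_mono)
      have "(rate_b lam n)\<^sup>2 \<le> (sqrt (real n / ls))\<^sup>2" using r r0 by (intro power_mono) auto
      then show "(rate_b lam n)\<^sup>2 \<le> real n / ls" using npos lspos by simp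
    qed simp
    also have "\<dots> \<le> 2 * real CARD('p) / c"
    proof -
      have "(norm d)\<^sup>2 \<le> 2 * real CARD('p) * ls / (c * real n)"
        using key c(1) npos by (simp add: le_divide_eq mult_ac)
      then have "(real n / ls) * (norm d)\<^sup>2 \<le> (real n / ls) * (2 * real CARD('p) * ls / (c * real n))"
        using npos lspos by (intro mult_left_mono) auto
      also have "\<dots> = 2 * real CARD('p) / c" using npos lspos c(1) by (simp add: field_simps)
      finally show ?thesis .
    qed
    finally show ?thesis unfolding d_def[symmetric] by (rule real_le_rsqrt)
  qed
qed

lemma LS_bound:
  fixes X :: "nat \<Rightarrow> nat \<Rightarrow> real^'p::finite"
  assumes full_rank: "\<And>n b. n \<ge> CARD('p) \<Longrightarrow> (\<forall>i<n. X n i \<bullet> b = 0) \<Longrightarrow> b = 0"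
    and c: "c > 0" "\<And>u. qf (XtX X n) u \<ge> c * real n * (norm u)\<^sup>2"
    and n: "n \<ge> CARD('p)"
  shows "c * real n * norm (betaLS X n (resp X n \<beta> \<epsilon>) - \<beta>) \<le> norm (Xty X n \<epsilon>)"
proof -
  define u where "u = betaLS X n (resp X n \<beta> \<epsilon>) - \<beta>"
  have "c * real n * (norm u)\<^sup>2 \<le> qf (XtX X n) u" by (rule c(2))
  also have "\<dots> = u \<bullet> Xty X n \<epsilon>"
  proof -
    have "XtX X n *v u = Xty X n \<epsilon>"
      unfolding u_def
      apply (rule LS_err[where X=X])
       apply (rule full_rank; assumption)
      apply (rule n)
      done
    then show ?thesis by (simp add: qf_def)
  qed
  also have "\<dots> \<le> norm u * norm (Xty X n \<epsilon>)" by (rule norm_cauchy_schwarz)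
  finally have *: "(c * real n * norm u) * norm u \<le> norm (Xty X n \<epsilon>) * norm u"
    by (simp add: power2_eq_square mult_ac)
  show ?thesis
  proof (cases "u = 0")
    case True then show ?thesis by (simp add: u_def[symmetric])
  next
    case False
    then have "norm u > 0" by simp
    with * show ?thesis unfolding u_def[symmetric] by simp
  qed
qed

theorem proposition2:
  fixes X :: "nat \<Rightarrow> nat \<Rightarrow> real^'p::finite"
    and lam :: "nat \<Rightarrow> 'p \<Rightarrow> real"
    and C :: "real^'p^'p"
    and D :: "real measure"
  assumes D_prob: "prob_space D"
    and D_borel: "sets D = sets borel"
    and D_var: "integrable D (\<lambda>x. x\<^sup>2)"
    and D_mean: "(\<integral>x. x \<partial>D) = 0"
    and D_pos: "(\<integral>x. x\<^sup>2 \<partial>D) > 0"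
    and full_rank: "\<And>n b. n \<ge> CARD('p) \<Longrightarrow> (\<forall>i<n. X n i \<bullet> b = 0) \<Longrightarrow> b = 0"
    and lim_C: "(\<lambda>n. (1 / real n) *\<^sub>R XtX X n) \<longlonglongrightarrow> C"
    and C_pd: "\<And>x. x \<noteq> 0 \<Longrightarrow> x \<bullet> (C *v x) > 0"
    and lam_nonneg: "\<And>n j. lam n j \<ge> 0"
    and LS_nonzero: "\<And>n \<beta> j. n \<ge> CARD('p) \<Longrightarrow>
        measure (err_space D n) {\<epsilon> \<in> space (err_space D n). betaLS X n (resp X n \<beta> \<epsilon>) $ j = 0} = 0"
  shows "\<forall>\<delta>>0. \<exists>M::real. \<forall>n\<ge>CARD('p). \<forall>\<beta>::real^'p.
           measure (err_space D n)
             {\<epsilon> \<in> space (err_space D n).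
                rate_b lam n * norm (betaAL X lam n (resp X n \<beta> \<epsilon>) - \<beta>) > M} \<le> \<delta>"
proof (intro allI impI)
  fix \<delta> :: real assume \<delta>: "\<delta> > 0"
  have "\<exists>c>0. \<forall>n\<ge>CARD('p). \<forall>u. qf (XtX X n) u \<ge> c * real n * (norm u)\<^sup>2"
    apply (rule uniform_lower[where X=X and C=C])
      apply (rule full_rank; assumption)
     apply (rule lim_C)
    apply (rule C_pd; assumption)
    done
  then obtain c where c: "c > 0" "\<And>n u. n \<ge> CARD('p) \<Longrightarrow> qf (XtX X n) u \<ge> c * real n * (norm u)\<^sup>2"
    by blast
  define s2 where "s2 = (\<integral>x. x\<^sup>2 \<partial>D)"
  have s2pos: "s2 > 0" using D_pos by (simp add: s2_def)
  define tr where "tr n = (\<Sum>j\<in>UNIV. ((1 / real n) *\<^sub>R XtX X n) $ j $ j)" for n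
  have "tr \<longlonglongrightarrow> (\<Sum>j\<in>UNIV. C $ j $ j)"
    unfolding tr_def by (intro tendsto_intros lim_C)
  then have "Bseq tr" by (intro convergent_imp_Bseq convergentI)
  then obtain B where B: "B > 0" "\<And>n. norm (tr n) \<le> B" by (auto simp: Bseq_def)
  have cp: "0 < CARD('p)" by simp
  have trace_bd: "(\<Sum>j\<in>UNIV. \<Sum>i<n. (X n i $ j)\<^sup>2) \<le> B * real n" if n: "n \<ge> CARD('p)" for n
  proof -
    have npos: "real n > 0" using n cp by linarith
    have "tr n = (1 / real n) * (\<Sum>j\<in>UNIV. \<Sum>i<n. (X n i $ j)\<^sup>2)"
      unfolding tr_def XtX_def by (simp add: sum_distrib_left power2_eq_square)
    moreover have "tr n \<le> B" using B(2)[of n] by simp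
    ultimately have "real n * tr n = (\<Sum>j\<in>UNIV. \<Sum>i<n. (X n i $ j)\<^sup>2)" "tr n \<le> B"
      using npos by (simp_all add: field_simps)
    then show ?thesis using npos
      by (metis mult.commute mult_le_cancel_left_pos)
  qed
  define K0 where "K0 = sqrt (2 * real CARD('p) / c)"
  define t where "t = sqrt (s2 * B / (c\<^sup>2 * \<delta>)) + 1"
  have sq0: "sqrt (s2 * B / (c\<^sup>2 * \<delta>)) \<ge> 0" using s2pos B(1) c(1) \<delta> by simp
  have tpos: "t > 0" unfolding t_def using sq0 by linarith
  have t2: "s2 * B / (c\<^sup>2 * \<delta>) < t\<^sup>2"
  proof -
    have "sqrt (s2 * B / (c\<^sup>2 * \<delta>)) < t" unfolding t_def by simp
    then have "(sqrt (s2 * B / (c\<^sup>2 * \<delta>)))\<^sup>2 < t\<^sup>2" using sq0 by (intro power_strict_mono) auto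
    then show ?thesis using s2pos B(1) c(1) \<delta> by simp
  qed
  show "\<exists>M. \<forall>n\<ge>CARD('p). \<forall>\<beta>. measure (err_space D n)
             {\<epsilon> \<in> space (err_space D n). rate_b lam n * norm (betaAL X lam n (resp X n \<beta> \<epsilon>) - \<beta>) > M} \<le> \<delta>"
  proof (intro exI[of _ "K0 + t"] allI impI)
    fix n :: nat and \<beta> :: "real^'p"
    assume n: "n \<ge> CARD('p)"
    have npos: "real n > 0" using n cp by linarith
    define G where "G \<epsilon> = (\<Sum>j\<in>UNIV. (\<Sum>i<n. X n i $ j * \<epsilon> i)\<^sup>2)" for \<epsilon> :: "nat \<Rightarrow> real"
    define a where "a = (t * c)\<^sup>2 * real n"
    have apos: "a > 0" unfolding a_def using tpos c(1) npos by simp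
    have G_norm: "G \<epsilon> = (norm (Xty X n \<epsilon>))\<^sup>2" for \<epsilon>
      unfolding G_def power2_norm_eq_inner inner_vec_def inner_real_def Xty_def by (simp add: power2_eq_square)
    have intG: "integrable (err_space D n) G"
      unfolding G_def by (rule quad_moment(1)[OF D_prob D_var D_mean D_borel])
    have EG: "(\<integral>\<epsilon>. G \<epsilon> \<partial>err_space D n) = s2 * (\<Sum>j\<in>UNIV. \<Sum>i<n. (X n i $ j)\<^sup>2)"
      unfolding G_def s2_def by (rule quad_moment(2)[OF D_prob D_var D_mean D_borel])
    have Gmeas: "G \<in> borel_measurable (err_space D n)"
      using intG by (rule borel_measurable_integrable)
    interpret Pn: prob_space "err_space D n" by (intro prob_space_PiM D_prob)
    have sub: "{\<epsilon> \<in> space (err_space D n). rate_b lam n * norm (betaAL X lam n (resp X n \<beta> \<epsilon>) - \<beta>) > K0 + t}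
        \<subseteq> {\<epsilon> \<in> space (err_space D n). a \<le> G \<epsilon>}"
    proof (safe)
      fix \<epsilon> assume \<epsilon>: "\<epsilon> \<in> space (err_space D n)"
        and big: "rate_b lam n * norm (betaAL X lam n (resp X n \<beta> \<epsilon>) - \<beta>) > K0 + t"
      define y where "y = resp X n \<beta> \<epsilon>"
      define u where "u = betaLS X n y - \<beta>"
      have alr: "rate_b lam n * norm (betaAL X lam n y - betaLS X n y) \<le> sqrt (2 * real CARD('p) / c)"
        apply (rule AL_rate[where X=X and lam=lam and c=c])
            apply (rule full_rank; assumption)
           apply (rule lam_nonneg)
          apply (rule c(1))
         apply (rule c(2)[OF n])
        apply (rule n)
        done
      have lsb: "c * real n * norm u \<le> norm (Xty X n \<epsilon>)"
        unfolding u_def y_def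
        apply (rule LS_bound[where X=X and c=c])
           apply (rule full_rank; assumption)
          apply (rule c(1))
         apply (rule c(2)[OF n])
        apply (rule n)
        done
      have "rate_b lam n * norm (betaAL X lam n y - \<beta>)
          \<le> rate_b lam n * (norm (betaAL X lam n y - betaLS X n y) + norm u)"
      proof (intro mult_left_mono rate_nn lam_nonneg)
        have "betaAL X lam n y - \<beta> = (betaAL X lam n y - betaLS X n y) + u" by (simp add: u_def)
        then show "norm (betaAL X lam n y - \<beta>) \<le> norm (betaAL X lam n y - betaLS X n y) + norm u"
          by (metis norm_triangle_ineq)
      qed
      also have "\<dots> = rate_b lam n * norm (betaAL X lam n y - betaLS X n y) + rate_b lam n * norm u"
        by (simp add: algebra_simps)
      also have "\<dots> \<le> K0 + sqrt (real n) * norm u"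
        using alr rate_le[of lam n]
        unfolding K0_def by (intro add_mono mult_right_mono) auto
      finally have "t < sqrt (real n) * norm u" using big unfolding y_def by linarith
      then have "c * sqrt (real n) * t < c * sqrt (real n) * (sqrt (real n) * norm u)"
        using c(1) npos by (intro mult_strict_left_mono) auto
      also have "\<dots> = c * real n * norm u" using npos by (simp add: mult_ac)
      also have "\<dots> \<le> norm (Xty X n \<epsilon>)"
        by (rule lsb)
      finally have lt: "c * sqrt (real n) * t < norm (Xty X n \<epsilon>)" .
      have "a = (c * sqrt (real n) * t)\<^sup>2" unfolding a_def using npos by (simp add: power_mult_distrib mult_ac)
      also have "\<dots> \<le> (norm (Xty X n \<epsilon>))\<^sup>2"
        using lt c(1) tpos npos by (intro power_mono) auto
      finally show "a \<le> G \<epsilon>" by (simp add: G_norm)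
    qed
    have "measure (err_space D n) {\<epsilon> \<in> space (err_space D n). rate_b lam n * norm (betaAL X lam n (resp X n \<beta> \<epsilon>) - \<beta>) > K0 + t}
        \<le> measure (err_space D n) {\<epsilon> \<in> space (err_space D n). a \<le> G \<epsilon>}"
    proof (rule Pn.finite_measure_mono[OF sub])
      have "G -` {a..} \<inter> space (err_space D n) \<in> sets (err_space D n)"
        by (rule measurable_sets[OF Gmeas]) simp
      moreover have "{\<epsilon> \<in> space (err_space D n). a \<le> G \<epsilon>} = G -` {a..} \<inter> space (err_space D n)"
        by auto
      ultimately show "{\<epsilon> \<in> space (err_space D n). a \<le> G \<epsilon>} \<in> sets (err_space D n)" by simp
    qed
    also have "\<dots> \<le> (\<integral>\<epsilon>. G \<epsilon> \<partial>err_space D n) / a"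
      by (rule integral_Markov_inequality_measure[OF intG _ _ apos, where A = "space (err_space D n)"])
         (auto simp: G_def intro!: AE_I2 sum_nonneg)
    also have "\<dots> \<le> s2 * (B * real n) / a"
      unfolding EG using trace_bd[OF n] s2pos apos
      by (intro divide_right_mono mult_left_mono) auto
    also have "\<dots> = s2 * B / (c\<^sup>2 * t\<^sup>2)"
      unfolding a_def using npos by (simp add: field_simps power_mult_distrib)
    also have "\<dots> \<le> \<delta>"
    proof -
      have "s2 * B < \<delta> * (c\<^sup>2 * t\<^sup>2)" using t2 c(1) \<delta> by (simp add: divide_less_eq mult_ac)
      then show ?thesis using c(1) tpos by (simp add: divide_le_eq mult_ac)
    qed
    finally show "measure (err_space D n) {\<epsilon> \<in> space (err_space D n). K0 + t < rate_b lam n * norm (betaAL X lam n (resp X n \<beta> \<epsilon>) - \<beta>)} \<le> \<delta>" .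
  qed
qed

end
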